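(* Let $\{\pi_\theta\}_{\theta\in\Theta}$, $\Theta\subseteq\mathbb R^d$ open, be a family of stationary policies with $\theta\mapsto\pi_\theta(a|s)$ differentiable for all $s,a$, and assume each $\sigma(P_{s,a},\cdot):\mathbb R^{\mathcal S}\to\mathbb R$ is differentiable. Then $\theta\mapsto V^{\pi_\theta}(s)$ is differentiable for every $s$ and $$\nabla_\theta V^{\pi_\theta}(s)=\mathbb E\Big[\sum_{t=0}^{\infty}\gamma^t\,Q^{\pi_\theta}(s_t,a_t)\,\nabla_\theta\log\pi_\theta(a_t|s_t)\,\Big|\,s_0=s\Big],$$ where the expectation is over trajectories with $a_t\sim\pi_\theta(\cdot|s_t)$ and $s_{t+1}\sim\hat P^{\pi_\theta}_{s_t,a_t}$.
   Context: $\mathcal S$ and $\mathcal A$ are finite sets; $\Delta(\mathcal X)$ denotes the probability simplex over a finite set $\mathcal X$. $P=\{P_{s,a}\}$ with $P_{s,a}\in\Delta(\mathcal S)$ is the nominal transition kernel, $r:\mathcal S\times\mathcal A\to[0,1]$, $\gamma\in[0,1)$. A stationary policy is a map $\pi:\mathcal S\to\Delta(\mathcal A)$. A function $\sigma:\mathbb R^{\mathcal S}\to\mathbb R$ is a convex risk measure if (i) $V'\le V$ pointwise implies $\sigma(V)\le\sigma(V')$; (ii) $\sigma(V+m)=\sigma(V)-m$ for every constant $m$; (iii) $\sigma$ is convex. For each $(s,a)$ a convex risk measure $\sigma(P_{s,a},\cdot)$ is given, with penalty $D(\hat\mu,P_{s,a}):=\sup_{V}\big(-\sigma(P_{s,a},V)-\mathbb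 E_{s'\sim\hat\mu}V(s')\big)$ for $\hat\mu\in\Delta(\mathcal S)$. For a policy $\pi$, $V^\pi$ is the unique solution of $V^\pi(s)=\sum_a\pi(a|s)(r(s,a)-\gamma\sigma(P_{s,a},V^\pi))$, $Q^\pi(s,a):=r(s,a)-\gamma\sigma(P_{s,a},V^\pi)$, and $\hat P^\pi_{s,a}\in\arg\min_{\hat\mu\in\Delta(\mathcal S)}\big(D(\hat\mu,P_{s,a})+\mathbb E_{s'\sim\hat\mu}V^\pi(s')\big)$. *)

theory Defs
  imports "HOL-Analysis.Analysis"
begin

definition prob_simplex :: "('s::finite \<Rightarrow> real) set" where
  "prob_simplex = {\<mu>. (\<forall>x. 0 \<le> \<mu> x) \<and> (\<Sum>x\<in>UNIV. \<mu> x) = 1}"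

text \<open>Stationary (stochastic) policy: pol s a = probability of action a in state s.\<close>
definition stoch_policy :: "('s::finite \<Rightarrow> 'a::finite \<Rightarrow> real) \<Rightarrow> bool" where
  "stoch_policy pol \<longleftrightarrow> (\<forall>s. pol s \<in> prob_simplex)"

definition convex_risk_measure :: "(real^'s::finite \<Rightarrow> real) \<Rightarrow> bool" where
  "convex_risk_measure \<rho> \<longleftrightarrow>
     (\<forall>V V'. (\<forall>i. V' $ i \<le> V $ i) \<longrightarrow> \<rho> V \<le> \<rho> V') \<and>
     (\<forall>V m. \<rho> (V + (\<chi> i. m)) = \<rho> V - m) \<and>
     convex_on UNIV \<rho>"

definition penalty :: "(real^'s::finite \<Rightarrow> real) \<Rightarrow> ('s \<Rightarrow> real) \<Rightarrow> ereal" where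
  "penalty \<rho> \<mu> = (SUP V\<in>UNIV. ereal (- \<rho> V - (\<Sum>s'\<in>UNIV. \<mu> s' * V $ s')))"

definition rvalue ::
  "('s::finite \<Rightarrow> 'a::finite \<Rightarrow> real^'s \<Rightarrow> real) \<Rightarrow> ('s \<Rightarrow> 'a \<Rightarrow> real) \<Rightarrow> real
     \<Rightarrow> ('s \<Rightarrow> 'a \<Rightarrow> real) \<Rightarrow> real^'s" where
  "rvalue \<sigma> r \<gamma> pol = (THE V. \<forall>s. V $ s = (\<Sum>a\<in>UNIV. pol s a * (r s a - \<gamma> * \<sigma> s a V)))"

definition rQ ::
  "('s::finite \<Rightarrow> 'a::finite \<Rightarrow> real^'s \<Rightarrow> real) \<Rightarrow> ('s \<Rightarrow> 'a \<Rightarrow> real) \<Rightarrow> real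
     \<Rightarrow> ('s \<Rightarrow> 'a \<Rightarrow> real) \<Rightarrow> 's \<Rightarrow> 'a \<Rightarrow> real" where
  "rQ \<sigma> r \<gamma> pol s a = r s a - \<gamma> * \<sigma> s a (rvalue \<sigma> r \<gamma> pol)"

definition is_worst_kernel ::
  "(real^'s::finite \<Rightarrow> real) \<Rightarrow> real^'s \<Rightarrow> ('s \<Rightarrow> real) \<Rightarrow> bool" where
  "is_worst_kernel \<rho> V \<mu> \<longleftrightarrow> \<mu> \<in> prob_simplex \<and>
     (\<forall>\<nu>\<in>prob_simplex. penalty \<rho> \<mu> + ereal (\<Sum>s'\<in>UNIV. \<mu> s' * V $ s')
                  \<le> penalty \<rho> \<nu> + ereal (\<Sum>s'\<in>UNIV. \<nu> s' * V $ s'))"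

text \<open>Marginal distribution of s_t for the chain s_0 = s0, a_t ~ pol(.|s_t),
  s_{t+1} ~ Ph s_t a_t.\<close>
fun state_dist ::
  "('s::finite \<Rightarrow> 'a::finite \<Rightarrow> real) \<Rightarrow> ('s \<Rightarrow> 'a \<Rightarrow> 's \<Rightarrow> real) \<Rightarrow> 's \<Rightarrow> nat \<Rightarrow> 's \<Rightarrow> real" where
  "state_dist pol Ph s0 0 = (\<lambda>s'. if s' = s0 then 1 else 0)"
| "state_dist pol Ph s0 (Suc t) =
     (\<lambda>s''. \<Sum>s'\<in>UNIV. \<Sum>a\<in>UNIV. state_dist pol Ph s0 t s' * pol s' a * Ph s' a s'')"

definition grad :: "('p::euclidean_space \<Rightarrow> real) \<Rightarrow> 'p \<Rightarrow> 'p" where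
  "grad f x = (SOME g. (f has_derivative (\<lambda>h. g \<bullet> h)) (at x))"

end

theory Submission
  imports Defs
begin


definition supn :: "real^'n::finite \<Rightarrow> real" where
  "supn x = Max (range (\<lambda>i. \<bar>x$i\<bar>))"

lemma supn_ge: "\<bar>x$i\<bar> \<le> supn x"
  unfolding supn_def by (rule Max_ge) auto

lemma supn_le: "(\<And>i. \<bar>x$i\<bar> \<le> c) \<Longrightarrow> supn x \<le> c"
  unfolding supn_def by (subst Max_le_iff) auto

lemma supn_nonneg: "0 \<le> supn x"
  using supn_ge[of x] abs_ge_zero order_trans by blast

lemma supn_commute: "supn (x - y) = supn (y - x)"
  unfolding supn_def by (simp add: abs_minus_commute)

lemma norm_le_supn: "norm x \<le> real CARD('n) * supn (x::real^'n::finite)"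
proof -
  have "norm x \<le> (\<Sum>i\<in>UNIV. \<bar>x$i\<bar>)" by (rule norm_le_l1_cart)
  also have "\<dots> \<le> (\<Sum>i\<in>(UNIV::'n set). supn x)" by (rule sum_mono) (rule supn_ge)
  finally show ?thesis by simp
qed

lemma supn_le_norm: "supn x \<le> norm x"
  by (rule supn_le) (rule component_le_norm_cart)

lemma crm_mono: "convex_risk_measure \<rho> \<Longrightarrow> (\<forall>i. V' $ i \<le> V $ i) \<Longrightarrow> \<rho> V \<le> \<rho> V'"
  unfolding convex_risk_measure_def by blast

lemma crm_shift: "convex_risk_measure \<rho> \<Longrightarrow> \<rho> (V + (\<chi> i. m)) = \<rho> V - m"
  unfolding convex_risk_measure_def by blast

lemma crm_convex: "convex_risk_measure \<rho> \<Longrightarrow> convex_on UNIV \<rho>"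
  unfolding convex_risk_measure_def by blast

lemma crm_lip1:
  assumes "convex_risk_measure \<rho>" shows "\<rho> y - \<rho> x \<le> supn (x - y)"
proof -
  let ?c = "supn (x - y)"
  have "\<forall>i. (x + (\<chi> i. - ?c)) $ i \<le> y $ i"
  proof
    fix i show "(x + (\<chi> i. - ?c)) $ i \<le> y $ i" using supn_ge[of "x - y" i] by (simp add: abs_le_iff)
  qed
  then have "\<rho> y \<le> \<rho> (x + (\<chi> i. - ?c))" using crm_mono[OF assms] by blast
  also have "\<dots> = \<rho> x + ?c" using crm_shift[OF assms] by simp
  finally show ?thesis by simp
qed

lemma crm_lip:
  assumes "convex_risk_measure \<rho>" shows "\<bar>\<rho> x - \<rho> y\<bar> \<le> supn (x - y)"
  using crm_lip1[OF assms, of x y] crm_lip1[OF assms, of y x] supn_commute[of x y] by linarith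

lemma dir_deriv:
  assumes "(f has_derivative D) (at V)"
  shows "((\<lambda>t::real. f (V + t *\<^sub>R h)) has_real_derivative D h) (at 0)"
proof -
  have 1: "((\<lambda>t::real. V + t *\<^sub>R h) has_derivative (\<lambda>t. t *\<^sub>R h)) (at 0)"
    by (auto intro!: derivative_eq_intros)
  have 2: "(f has_derivative D) (at (V + (0::real) *\<^sub>R h))" using assms by simp
  have "((\<lambda>t::real. f (V + t *\<^sub>R h)) has_derivative (\<lambda>t. D (t *\<^sub>R h))) (at 0)"
    using has_derivative_compose[OF 1 2] by simp
  moreover have "(\<lambda>t. D (t *\<^sub>R h)) = (\<lambda>t. t * D h)"
    using has_derivative_bounded_linear[OF assms] by (simp add: linear_simps)
  moreover have "(\<lambda>t. t * D h) = (*) (D h)" by (auto simp: mult.commute)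
  ultimately show ?thesis unfolding has_field_derivative_def by simp
qed

lemma convex_tangent:
  fixes f :: "'v::real_normed_vector \<Rightarrow> real"
  assumes cv: "convex_on UNIV f" and D: "(f has_derivative D) (at V)"
  shows "f V + D (W - V) \<le> f W"
proof -
  let ?g = "\<lambda>t::real. f (V + t *\<^sub>R (W - V))"
  have "convex_on UNIV ?g"
  proof (rule convex_onI)
    fix t x y :: real assume "0 < t" "t < 1"
    have "V + ((1 - t) * x + t * y) *\<^sub>R (W - V) = (1 - t) *\<^sub>R (V + x *\<^sub>R (W - V)) + t *\<^sub>R (V + y *\<^sub>R (W - V))"
      by (simp add: algebra_simps)
    then show "?g ((1 - t) *\<^sub>R x + t *\<^sub>R y) \<le> (1 - t) * ?g x + t * ?g y"
      using convex_onD[OF cv, of t "V + x *\<^sub>R (W - V)" "V + y *\<^sub>R (W - V)"] \<open>0 < t\<close> \<open>t < 1\<close> by simp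
  qed simp
  moreover have "(?g has_real_derivative D (W - V)) (at 0 within UNIV)"
    using dir_deriv[OF D] by simp
  ultimately have "?g 1 - ?g 0 \<ge> D (W - V) * (1 - 0)"
    by (intro convex_on_imp_above_tangent) auto
  then show ?thesis by simp
qed

lemma lin_rep:
  assumes "bounded_linear D"
  shows "D (h::real^'n::finite) = (\<Sum>i\<in>UNIV. h$i * D (axis i 1))"
proof -
  have "D h = D (\<Sum>i\<in>UNIV. h$i *\<^sub>R axis i 1)" using basis_expansion[of h] by (simp add: scalar_mult_eq_scaleR)
  also have "\<dots> = (\<Sum>i\<in>UNIV. h$i * D (axis i 1))"
    using bounded_linear.linear[OF assms] by (simp add: linear_sum linear_scale)
  finally show ?thesis .
qed

lemma crm_deriv:
  fixes \<rho> :: "real^'s::finite \<Rightarrow> real"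
  assumes crm: "convex_risk_measure \<rho>" and dif: "\<rho> differentiable (at V)"
    and wk: "is_worst_kernel \<rho> V \<mu>"
  shows "(\<rho> has_derivative (\<lambda>h. - (\<Sum>s\<in>UNIV. \<mu> s * h$s))) (at V)"
proof -
  obtain D where D: "(\<rho> has_derivative D) (at V)" using dif unfolding differentiable_def by blast
  have lin: "bounded_linear D" using D has_derivative_bounded_linear by blast
  have tang: "\<rho> V + D (W - V) \<le> \<rho> W" for W
    using convex_tangent[OF crm_convex[OF crm] D] .
  define \<nu> where "\<nu> s = - D (axis s 1)" for s
  have Drep: "D h = - (\<Sum>s\<in>UNIV. \<nu> s * h$s)" for h
    using lin_rep[OF lin, of h] by (simp add: \<nu>_def sum_negf mult.commute)
  have nn: "0 \<le> \<nu> s" for s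
  proof -
    have "\<rho> V + D (axis s 1) \<le> \<rho> (V + axis s 1)" using tang[of "V + axis s 1"] by simp
    also have "\<dots> \<le> \<rho> V" by (rule crm_mono[OF crm]) (simp add: axis_def)
    finally show ?thesis by (simp add: \<nu>_def)
  qed
  have D1: "D (\<chi> i. 1) = - (\<Sum>s\<in>UNIV. \<nu> s)" using Drep[of "\<chi> i. 1"] by simp
  have "\<rho> V + D (\<chi> i. 1) \<le> \<rho> V - 1" using tang[of "V + (\<chi> i. 1)"] crm_shift[OF crm, of V 1] by simp
  moreover have "\<rho> V + D (\<chi> i. -1) \<le> \<rho> V + 1" using tang[of "V + (\<chi> i. -1)"] crm_shift[OF crm, of V "-1"] by simp
  moreover have "D (\<chi> i. -1) = - D (\<chi> i. 1)"
  proof -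
    have "(\<chi> i. -1) = - ((\<chi> i. 1) :: real^'s)" by (simp add: vec_eq_iff)
    then show ?thesis using linear_neg[OF bounded_linear.linear[OF lin]] by simp
  qed
  ultimately have sum1: "(\<Sum>s\<in>UNIV. \<nu> s) = 1" using D1 by linarith
  have \<nu>S: "\<nu> \<in> prob_simplex" using nn sum1 by (simp add: prob_simplex_def)
  have pen\<nu>: "penalty \<rho> \<nu> \<le> ereal (- \<rho> V - (\<Sum>s'\<in>UNIV. \<nu> s' * V $ s'))"
    unfolding penalty_def
  proof (rule SUP_least)
    fix W :: "real^'s"
    have "\<rho> V - (\<Sum>s\<in>UNIV. \<nu> s * (W - V)$s) \<le> \<rho> W" using tang[of W] Drep[of "W - V"] by simp
    moreover have "(\<Sum>s\<in>UNIV. \<nu> s * (W - V)$s) = (\<Sum>s\<in>UNIV. \<nu> s * W$s) - (\<Sum>s\<in>UNIV. \<nu> s * V$s)"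
      by (simp add: right_diff_distrib sum_subtractf)
    ultimately show "ereal (- \<rho> W - (\<Sum>s'\<in>UNIV. \<nu> s' * W $ s')) \<le> ereal (- \<rho> V - (\<Sum>s'\<in>UNIV. \<nu> s' * V $ s'))"
      by simp
  qed
  have "penalty \<rho> \<mu> + ereal (\<Sum>s'\<in>UNIV. \<mu> s' * V $ s') \<le> penalty \<rho> \<nu> + ereal (\<Sum>s'\<in>UNIV. \<nu> s' * V $ s')"
    using wk \<nu>S unfolding is_worst_kernel_def by blast
  also have "\<dots> \<le> ereal (- \<rho> V - (\<Sum>s'\<in>UNIV. \<nu> s' * V $ s')) + ereal (\<Sum>s'\<in>UNIV. \<nu> s' * V $ s')"
    by (rule add_right_mono[OF pen\<nu>])
  finally have penmu: "penalty \<rho> \<mu> + ereal (\<Sum>s'\<in>UNIV. \<mu> s' * V $ s') \<le> ereal (- \<rho> V)" by simp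
  have sub: "\<rho> V - (\<Sum>s\<in>UNIV. \<mu> s * (W - V)$s) \<le> \<rho> W" for W
  proof -
    have "ereal (- \<rho> W - (\<Sum>s'\<in>UNIV. \<mu> s' * W $ s')) \<le> penalty \<rho> \<mu>"
      unfolding penalty_def by (rule SUP_upper) simp
    then have "ereal (- \<rho> W - (\<Sum>s'\<in>UNIV. \<mu> s' * W $ s')) + ereal (\<Sum>s'\<in>UNIV. \<mu> s' * V $ s') \<le> ereal (- \<rho> V)"
      using penmu by (meson add_right_mono order_trans)
    then have "- \<rho> W - (\<Sum>s'\<in>UNIV. \<mu> s' * W $ s') + (\<Sum>s'\<in>UNIV. \<mu> s' * V $ s') \<le> - \<rho> V"
      by simp
    moreover have "(\<Sum>s\<in>UNIV. \<mu> s * (W - V)$s) = (\<Sum>s\<in>UNIV. \<mu> s * W$s) - (\<Sum>s\<in>UNIV. \<mu> s * V$s)"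
      by (simp add: right_diff_distrib sum_subtractf)
    ultimately show ?thesis by simp
  qed
  have DD: "D h = - (\<Sum>s\<in>UNIV. \<mu> s * h$s)" for h
  proof -
    let ?g = "\<lambda>t::real. \<rho> (V + t *\<^sub>R h) - \<rho> V + t * (\<Sum>s\<in>UNIV. \<mu> s * h$s)"
    have gd: "(?g has_real_derivative D h - 0 + 1 * (\<Sum>s\<in>UNIV. \<mu> s * h$s)) (at 0)"
      by (intro derivative_intros dir_deriv[OF D] DERIV_cmult_right DERIV_ident)
    have gm: "\<forall>y. \<bar>0 - y\<bar> < 1 \<longrightarrow> ?g 0 \<le> ?g y"
    proof (intro allI impI)
      fix y :: real
      have "(\<Sum>s\<in>UNIV. \<mu> s * (V + y *\<^sub>R h - V)$s) = y * (\<Sum>s\<in>UNIV. \<mu> s * h$s)"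
        by (simp add: sum_distrib_left algebra_simps)
      then show "?g 0 \<le> ?g y" using sub[of "V + y *\<^sub>R h"] by simp
    qed
    have "D h - 0 + 1 * (\<Sum>s\<in>UNIV. \<mu> s * h$s) = 0"
      by (rule DERIV_local_min[OF gd zero_less_one gm])
    then show ?thesis by simp
  qed
  have "D = (\<lambda>h. - (\<Sum>s\<in>UNIV. \<mu> s * h$s))" using DD by auto
  then show ?thesis using D by simp
qed


definition bell where
  "bell \<sigma> r \<gamma> p V = (\<chi> s. \<Sum>a\<in>UNIV. p s a * (r s a - \<gamma> * \<sigma> s a V))"

lemma stoch_nonneg: "stoch_policy p \<Longrightarrow> 0 \<le> p s a"
  unfolding stoch_policy_def prob_simplex_def by blast

lemma stoch_sum: "stoch_policy p \<Longrightarrow> (\<Sum>a\<in>UNIV. p s a) = 1"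
  unfolding stoch_policy_def prob_simplex_def by blast

lemma bell_diff_bound:
  fixes p :: "'s::finite \<Rightarrow> 'a::finite \<Rightarrow> real" and \<sigma> :: "'s \<Rightarrow> 'a \<Rightarrow> real^'s \<Rightarrow> real"
  assumes p: "stoch_policy p" and crm: "\<forall>s a. convex_risk_measure (\<sigma> s a)" and g: "0 \<le> \<gamma>"
  shows "\<bar>bell \<sigma> r \<gamma> p V $ s - bell \<sigma> r \<gamma> p W $ s\<bar> \<le> \<gamma> * supn (V - W)"
proof -
  have "bell \<sigma> r \<gamma> p V $ s - bell \<sigma> r \<gamma> p W $ s = (\<Sum>a\<in>UNIV. p s a * (\<gamma> * (\<sigma> s a W - \<sigma> s a V)))"
    by (simp add: bell_def sum_subtractf[symmetric] algebra_simps)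
  also have "\<bar>\<dots>\<bar> \<le> (\<Sum>a\<in>UNIV. \<bar>p s a * (\<gamma> * (\<sigma> s a W - \<sigma> s a V))\<bar>)" by (rule sum_abs)
  also have "\<dots> \<le> (\<Sum>a\<in>UNIV. p s a * (\<gamma> * supn (V - W)))"
  proof (rule sum_mono)
    fix a
    have "\<bar>\<sigma> s a W - \<sigma> s a V\<bar> \<le> supn (V - W)"
      using crm_lip[of "\<sigma> s a" W V] crm supn_commute[of V W] by simp
    then show "\<bar>p s a * (\<gamma> * (\<sigma> s a W - \<sigma> s a V))\<bar> \<le> p s a * (\<gamma> * supn (V - W))"
      using stoch_nonneg[OF p, of s a] g by (simp add: abs_mult mult_left_mono)
  qed
  also have "\<dots> = \<gamma> * supn (V - W)" by (simp add: sum_distrib_right[symmetric] stoch_sum[OF p])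
  finally show ?thesis .
qed

lemma bell_contr:
  fixes p :: "'s::finite \<Rightarrow> 'a::finite \<Rightarrow> real" and \<sigma> :: "'s \<Rightarrow> 'a \<Rightarrow> real^'s \<Rightarrow> real"
  assumes p: "stoch_policy p" and crm: "\<forall>s a. convex_risk_measure (\<sigma> s a)" and g: "0 \<le> \<gamma>"
  shows "supn (bell \<sigma> r \<gamma> p V - bell \<sigma> r \<gamma> p W) \<le> \<gamma> * supn (V - W)"
  by (rule supn_le) (use bell_diff_bound[OF assms] in simp)

lemma bell_iter:
  fixes p :: "'s::finite \<Rightarrow> 'a::finite \<Rightarrow> real" and \<sigma> :: "'s \<Rightarrow> 'a \<Rightarrow> real^'s \<Rightarrow> real"
  assumes p: "stoch_policy p" and crm: "\<forall>s a. convex_risk_measure (\<sigma> s a)" and g: "0 \<le> \<gamma>"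
  shows "supn ((bell \<sigma> r \<gamma> p ^^ k) V - (bell \<sigma> r \<gamma> p ^^ k) W) \<le> \<gamma> ^ k * supn (V - W)"
proof (induction k)
  case 0 then show ?case by simp
next
  case (Suc k)
  have "supn ((bell \<sigma> r \<gamma> p ^^ Suc k) V - (bell \<sigma> r \<gamma> p ^^ Suc k) W)
     \<le> \<gamma> * supn ((bell \<sigma> r \<gamma> p ^^ k) V - (bell \<sigma> r \<gamma> p ^^ k) W)"
    using bell_contr[OF assms] by simp
  also have "\<dots> \<le> \<gamma> * (\<gamma> ^ k * supn (V - W))" using Suc g by (simp add: mult_left_mono)
  finally show ?case by simp
qed

lemma bell_unique_fix:
  fixes p :: "'s::finite \<Rightarrow> 'a::finite \<Rightarrow> real" and \<sigma> :: "'s \<Rightarrow> 'a \<Rightarrow> real^'s \<Rightarrow> real"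
  assumes p: "stoch_policy p" and crm: "\<forall>s a. convex_risk_measure (\<sigma> s a)" and g: "0 \<le> \<gamma>" "\<gamma> < 1"
  shows "\<exists>!V. bell \<sigma> r \<gamma> p V = V"
proof -
  let ?f = "bell \<sigma> r \<gamma> p"
  let ?n = "real CARD('s)"
  have npos: "?n > 0" by simp
  obtain k where k: "\<gamma> ^ k < 1 / ?n" using real_arch_pow_inv[of "1 / ?n" \<gamma>] g npos by auto
  let ?c = "?n * \<gamma> ^ k"
  have c0: "0 \<le> ?c" using g by simp
  have c1: "?c < 1" using k npos by (simp add: field_simps)
  have "\<forall>x y. dist ((?f ^^ k) x) ((?f ^^ k) y) \<le> ?c * dist x y"
  proof (intro allI)
    fix x y :: "real^'s"
    have "dist ((?f ^^ k) x) ((?f ^^ k) y) \<le> ?n * supn ((?f ^^ k) x - (?f ^^ k) y)"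
      unfolding dist_norm by (rule norm_le_supn)
    also have "\<dots> \<le> ?n * (\<gamma> ^ k * supn (x - y))"
      using bell_iter[OF p crm g(1)] by (simp add: mult_left_mono)
    also have "\<dots> \<le> ?n * (\<gamma> ^ k * dist x y)"
      using supn_le_norm[of "x - y"] g by (simp add: mult_left_mono dist_norm)
    finally show "dist ((?f ^^ k) x) ((?f ^^ k) y) \<le> ?c * dist x y" by (simp add: mult.assoc)
  qed
  then obtain x where x: "(?f ^^ k) x = x" and xu: "\<And>y. (?f ^^ k) y = y \<Longrightarrow> y = x"
    using banach_fix_type[OF c0 c1] by metis
  have "(?f ^^ k) (?f x) = ?f x" using x by (metis funpow_swap1)
  then have fx: "?f x = x" using xu by blast
  have uniq: "V = W" if "?f V = V" "?f W = W" for V W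
  proof -
    have "supn (V - W) \<le> \<gamma> * supn (V - W)" using bell_contr[OF p crm g(1), of r V W] that by simp
    then have "supn (V - W) \<le> 0" using g supn_nonneg[of "V - W"]
      by (metis mult_le_cancel_right1 not_le order_le_less_trans)
    then have "\<forall>i. V $ i = W $ i" using supn_ge[of "V - W"] by (metis abs_le_zero_iff order_trans right_minus_eq vector_minus_component)
    then show ?thesis by (simp add: vec_eq_iff)
  qed
  show ?thesis using fx uniq by blast
qed

lemma rvalue_fix:
  fixes p :: "'s::finite \<Rightarrow> 'a::finite \<Rightarrow> real" and \<sigma> :: "'s \<Rightarrow> 'a \<Rightarrow> real^'s \<Rightarrow> real"
  assumes p: "stoch_policy p" and crm: "\<forall>s a. convex_risk_measure (\<sigma> s a)" and g: "0 \<le> \<gamma>" "\<gamma> < 1"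
  shows "rvalue \<sigma> r \<gamma> p $ s = (\<Sum>a\<in>UNIV. p s a * (r s a - \<gamma> * \<sigma> s a (rvalue \<sigma> r \<gamma> p)))"
proof -
  have eq: "(\<forall>s. V $ s = (\<Sum>a\<in>UNIV. p s a * (r s a - \<gamma> * \<sigma> s a V))) \<longleftrightarrow> bell \<sigma> r \<gamma> p V = V" for V
    by (auto simp: bell_def vec_eq_iff)
  have "\<exists>!V. \<forall>s. V $ s = (\<Sum>a\<in>UNIV. p s a * (r s a - \<gamma> * \<sigma> s a V))"
    unfolding eq by (rule bell_unique_fix[OF assms])
  from theI'[OF this] show ?thesis unfolding rvalue_def by blast
qed




context
  fixes pol :: "'s::finite \<Rightarrow> 'a::finite \<Rightarrow> real" and Ph :: "'s \<Rightarrow> 'a \<Rightarrow> 's \<Rightarrow> real" and \<gamma> :: real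
  assumes pol: "stoch_policy pol" and Ph: "\<forall>s a. Ph s a \<in> prob_simplex"
    and g0: "0 \<le> \<gamma>" and g1: "\<gamma> < 1"
begin

lemma Ph_nonneg: "0 \<le> Ph s a s'" using Ph unfolding prob_simplex_def by blast
lemma Ph_sum: "(\<Sum>s'\<in>UNIV. Ph s a s') = 1" using Ph unfolding prob_simplex_def by blast

lemma sd_nonneg: "0 \<le> state_dist pol Ph s0 t s'"
  by (induction t arbitrary: s') (auto intro!: sum_nonneg simp: stoch_nonneg[OF pol] Ph_nonneg)

lemma sd_sum: "(\<Sum>s'\<in>UNIV. state_dist pol Ph s0 t s') = 1"
proof (induction t)
  case 0 then show ?case by simp
next
  case (Suc t)
  have "(\<Sum>s''\<in>UNIV. state_dist pol Ph s0 (Suc t) s'')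
      = (\<Sum>s''\<in>UNIV. \<Sum>s'\<in>UNIV. \<Sum>a\<in>UNIV. state_dist pol Ph s0 t s' * pol s' a * Ph s' a s'')"
    by simp
  also have "\<dots> = (\<Sum>s'\<in>UNIV. \<Sum>s''\<in>UNIV. \<Sum>a\<in>UNIV. state_dist pol Ph s0 t s' * pol s' a * Ph s' a s'')"
    by (rule sum.swap)
  also have "\<dots> = (\<Sum>s'\<in>UNIV. \<Sum>a\<in>UNIV. \<Sum>s''\<in>UNIV. state_dist pol Ph s0 t s' * pol s' a * Ph s' a s'')"
    by (rule sum.cong[OF refl], rule sum.swap)
  also have "\<dots> = (\<Sum>s'\<in>UNIV. \<Sum>a\<in>UNIV. state_dist pol Ph s0 t s' * pol s' a)"
    by (simp add: sum_distrib_left[symmetric] Ph_sum)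
  also have "\<dots> = (\<Sum>s'\<in>UNIV. state_dist pol Ph s0 t s')"
    by (simp add: sum_distrib_left[symmetric] stoch_sum[OF pol])
  finally show ?case using Suc by simp
qed

lemma sd_le1: "state_dist pol Ph s0 t s' \<le> 1"
proof -
  have "state_dist pol Ph s0 t s' \<le> (\<Sum>s'\<in>UNIV. state_dist pol Ph s0 t s')"
    by (rule member_le_sum) (auto simp: sd_nonneg)
  then show ?thesis using sd_sum by simp
qed

lemma sd_shift:
  "(\<Sum>s'\<in>UNIV. state_dist pol Ph s0 t s' * (\<Sum>a\<in>UNIV. pol s' a * (\<Sum>s''\<in>UNIV. Ph s' a s'' * x s'')))
   = (\<Sum>s''\<in>UNIV. state_dist pol Ph s0 (Suc t) s'' * x s'')"
proof -
  have "(\<Sum>s''\<in>UNIV. state_dist pol Ph s0 (Suc t) s'' * x s'')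
     = (\<Sum>s''\<in>UNIV. \<Sum>s'\<in>UNIV. \<Sum>a\<in>UNIV. state_dist pol Ph s0 t s' * pol s' a * Ph s' a s'' * x s'')"
    by (simp add: sum_distrib_right)
  also have "\<dots> = (\<Sum>s'\<in>UNIV. \<Sum>a\<in>UNIV. \<Sum>s''\<in>UNIV. state_dist pol Ph s0 t s' * pol s' a * Ph s' a s'' * x s'')"
    by (subst sum.swap, rule sum.cong[OF refl], rule sum.swap)
  also have "\<dots> = (\<Sum>s'\<in>UNIV. state_dist pol Ph s0 t s' * (\<Sum>a\<in>UNIV. pol s' a * (\<Sum>s''\<in>UNIV. Ph s' a s'' * x s'')))"
    by (simp add: sum_distrib_left mult.assoc)
  finally show ?thesis by simp
qed

lemma sd_summable: "summable (\<lambda>t. \<gamma> ^ t * state_dist pol Ph s0 t s')"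
proof (rule summable_comparison_test[where g="\<lambda>t. \<gamma> ^ t"])
  show "\<exists>N. \<forall>n\<ge>N. norm (\<gamma> ^ n * state_dist pol Ph s0 n s') \<le> \<gamma> ^ n"
    using sd_nonneg sd_le1 g0 by (auto simp: abs_mult intro!: mult_left_le)
  show "summable (\<lambda>t. \<gamma> ^ t)" using g0 g1 by (simp add: summable_geometric)
qed

lemma geo_bounded_summable:
  assumes "\<And>t. \<bar>f t\<bar> \<le> B"
  shows "summable (\<lambda>t. \<gamma> ^ t * f t)"
proof (rule summable_comparison_test[where g="\<lambda>t. \<gamma> ^ t * B"])
  show "\<exists>N. \<forall>n\<ge>N. norm (\<gamma> ^ n * f n) \<le> \<gamma> ^ n * B"
    using assms g0 by (auto simp: abs_mult intro!: mult_left_mono)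
  show "summable (\<lambda>t. \<gamma> ^ t * B)" using g0 g1 by (intro summable_mult2) (simp add: summable_geometric)
qed

lemma sd_avg_bound: "\<bar>\<Sum>s'\<in>UNIV. state_dist pol Ph s0 t s' * y s'\<bar> \<le> (\<Sum>s'\<in>UNIV. \<bar>y s'\<bar>)"
proof -
  have "\<bar>\<Sum>s'\<in>UNIV. state_dist pol Ph s0 t s' * y s'\<bar> \<le> (\<Sum>s'\<in>UNIV. \<bar>state_dist pol Ph s0 t s' * y s'\<bar>)"
    by (rule sum_abs)
  also have "\<dots> \<le> (\<Sum>s'\<in>UNIV. \<bar>y s'\<bar>)"
    by (rule sum_mono) (simp add: abs_mult sd_nonneg sd_le1 mult_left_le_one_le)
  finally show ?thesis .
qed

definition coef where "coef s0 s' = (\<Sum>t. \<gamma> ^ t * state_dist pol Ph s0 t s')"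

lemma coef_lin: "(\<Sum>s'\<in>UNIV. coef s0 s' * y s') = (\<Sum>t. \<gamma> ^ t * (\<Sum>s'\<in>UNIV. state_dist pol Ph s0 t s' * y s'))"
proof -
  have "(\<Sum>s'\<in>UNIV. coef s0 s' * y s') = (\<Sum>s'\<in>UNIV. \<Sum>t. \<gamma> ^ t * state_dist pol Ph s0 t s' * y s')"
    unfolding coef_def by (simp add: suminf_mult2[OF sd_summable])
  also have "\<dots> = (\<Sum>t. \<Sum>s'\<in>UNIV. \<gamma> ^ t * state_dist pol Ph s0 t s' * y s')"
    by (rule suminf_sum[symmetric]) (rule summable_mult2[OF sd_summable])
  also have "\<dots> = (\<Sum>t. \<gamma> ^ t * (\<Sum>s'\<in>UNIV. state_dist pol Ph s0 t s' * y s'))"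
    by (simp add: sum_distrib_left mult.assoc)
  finally show ?thesis .
qed

lemma lin_summable: "summable (\<lambda>t. \<gamma> ^ t * (\<Sum>s'\<in>UNIV. state_dist pol Ph s0 t s' * y s'))"
proof -
  have "summable (\<lambda>t. \<Sum>s'\<in>UNIV. \<gamma> ^ t * state_dist pol Ph s0 t s' * y s')"
    by (rule summable_sum) (rule summable_mult2[OF sd_summable])
  then show ?thesis by (simp add: sum_distrib_left mult.assoc)
qed

lemma coef_identity:
  "x s0 = (\<Sum>s'\<in>UNIV. coef s0 s' * (x s' - \<gamma> * (\<Sum>a\<in>UNIV. pol s' a * (\<Sum>s''\<in>UNIV. Ph s' a s'' * x s''))))"
proof -
  define A where "A t = \<gamma> ^ t * (\<Sum>s'\<in>UNIV. state_dist pol Ph s0 t s' * x s')" for t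
  have sA: "summable A" unfolding A_def by (rule lin_summable)
  have "(\<Sum>s'\<in>UNIV. coef s0 s' * (x s' - \<gamma> * (\<Sum>a\<in>UNIV. pol s' a * (\<Sum>s''\<in>UNIV. Ph s' a s'' * x s''))))
     = (\<Sum>s'\<in>UNIV. coef s0 s' * x s') - \<gamma> * (\<Sum>s'\<in>UNIV. coef s0 s' * (\<Sum>a\<in>UNIV. pol s' a * (\<Sum>s''\<in>UNIV. Ph s' a s'' * x s'')))"
    by (simp add: right_diff_distrib sum_subtractf sum_distrib_left mult.left_commute)
  also have "(\<Sum>s'\<in>UNIV. coef s0 s' * x s') = suminf A" unfolding A_def by (rule coef_lin)
  also have "\<gamma> * (\<Sum>s'\<in>UNIV. coef s0 s' * (\<Sum>a\<in>UNIV. pol s' a * (\<Sum>s''\<in>UNIV. Ph s' a s'' * x s'')))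
      = \<gamma> * (\<Sum>t. \<gamma> ^ t * (\<Sum>s'\<in>UNIV. state_dist pol Ph s0 (Suc t) s' * x s'))"
    by (simp add: coef_lin sd_shift)
  also have "\<dots> = (\<Sum>t. A (Suc t))"
  proof -
    have sm: "summable (\<lambda>t. \<gamma> ^ t * (\<Sum>s'\<in>UNIV. state_dist pol Ph s0 (Suc t) s' * x s'))"
      by (rule geo_bounded_summable[OF sd_avg_bound])
    show ?thesis unfolding A_def using suminf_mult[OF sm, of \<gamma>] by (simp add: mult.assoc)
  qed
  also have "\<dots> = suminf A - A 0" by (rule suminf_split_head[OF sA])
  finally show ?thesis by (simp add: A_def[abs_def] if_distrib[of "\<lambda>z. z * _"] sum.delta)
qed

end



lemma deriv_zero_of_o:
  fixes f :: "'v::real_normed_vector \<Rightarrow> real"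
  assumes "f x = 0" "((\<lambda>y. f y / norm (y - x)) \<longlongrightarrow> 0) (at x)"
  shows "(f has_derivative (\<lambda>h. 0)) (at x)"
proof -
  have "((\<lambda>y. \<bar>f y / norm (y - x)\<bar>) \<longlongrightarrow> 0) (at x)" by (rule tendsto_rabs_zero[OF assms(2)])
  then show ?thesis unfolding has_derivative_iff_norm using assms(1) by simp
qed

lemma deriv_zero_quad:
  fixes f :: "'v::real_normed_vector \<Rightarrow> real"
  assumes "f x = 0" "eventually (\<lambda>y. \<bar>f y\<bar> \<le> C * (norm (y - x))^2) (at x)"
  shows "(f has_derivative (\<lambda>h. 0)) (at x)"
proof (rule deriv_zero_of_o)
  show "f x = 0" by (rule assms(1))
  have t: "((\<lambda>y. y - x) \<longlongrightarrow> 0) (at x)"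
  proof -
    have "((\<lambda>y. y - x) \<longlongrightarrow> x - x) (at x)" by (intro tendsto_diff tendsto_ident_at tendsto_const)
    then show ?thesis by simp
  qed
  show "((\<lambda>y. f y / norm (y - x)) \<longlongrightarrow> 0) (at x)"
  proof (rule tendsto_0_le[OF t, where K=C])
    show "\<forall>\<^sub>F y in at x. norm (f y / norm (y - x)) \<le> norm (y - x) * C"
      using assms(2) eventually_neq_at_within[of x x UNIV]
    proof eventually_elim
      case (elim y)
      then have n0: "norm (y - x) > 0" by simp
      have "norm (f y / norm (y - x)) = \<bar>f y\<bar> / norm (y - x)" by (simp add: abs_div)
      also have "\<dots> \<le> C * (norm (y - x))^2 / norm (y - x)" by (rule divide_right_mono) (use elim in auto)
      also have "\<dots> = norm (y - x) * C" using n0 by (simp add: power2_eq_square)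
      finally show ?case .
    qed
  qed
qed

lemma deriv_lip:
  assumes "(f has_derivative D) (at x)"
  shows "\<exists>C. eventually (\<lambda>y. norm (f y - f x) \<le> C * norm (y - x)) (at x)"
proof -
  have bl: "bounded_linear D" and lim: "((\<lambda>y. norm ((f y - f x) - D (y - x)) / norm (y - x)) \<longlongrightarrow> 0) (at x)"
    using assms unfolding has_derivative_iff_norm by auto
  obtain K where K: "\<And>h. norm (D h) \<le> norm h * K" using bounded_linear.bounded[OF bl] by blast
  have ev: "eventually (\<lambda>y. norm ((f y - f x) - D (y - x)) / norm (y - x) < 1) (at x)"
    using order_tendstoD(2)[OF lim] by simp
  have "eventually (\<lambda>y. norm (f y - f x) \<le> (1 + K) * norm (y - x)) (at x)"
    using ev eventually_neq_at_within[of x x UNIV]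
  proof eventually_elim
    case (elim y)
    then have pos: "norm (y - x) > 0" by simp
    have "norm ((f y - f x) - D (y - x)) \<le> norm (y - x)" using elim pos by (simp add: divide_less_eq)
    moreover have "norm (f y - f x) \<le> norm ((f y - f x) - D (y - x)) + norm (D (y - x))"
      by (metis norm_triangle_sub add.commute)
    ultimately show ?case using K[of "y - x"] by (simp add: distrib_right mult.commute)
  qed
  then show ?thesis by blast
qed

lemma lip_chain:
  fixes g :: "'w::real_normed_vector \<Rightarrow> real" and F :: "'v::real_normed_vector \<Rightarrow> 'w"
  assumes gd: "(g has_derivative g') (at y0)" and F0: "F x = y0"
    and FL: "eventually (\<lambda>y. norm (F y - y0) \<le> C * norm (y - x)) (at x)"
  shows "((\<lambda>y. g (F y) - g y0 - g' (F y - y0)) has_derivative (\<lambda>h. 0)) (at x)"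
proof (rule deriv_zero_of_o)
  have bl: "bounded_linear g'" using gd has_derivative_bounded_linear by blast
  show "g (F x) - g y0 - g' (F x - y0) = 0" using F0 linear_0[OF bounded_linear.linear[OF bl]] by simp
  define \<phi> where "\<phi> y = norm (g y - g y0 - g' (y - y0)) / norm (y - y0)" for y
  have "(\<phi> \<longlongrightarrow> 0) (at y0)" using gd unfolding has_derivative_iff_norm \<phi>_def by simp
  moreover have "\<phi> y0 = 0" by (simp add: \<phi>_def)
  ultimately have cont: "isCont \<phi> y0" unfolding isCont_def by simp
  have t: "((\<lambda>y. y - x) \<longlongrightarrow> 0) (at x)"
  proof -
    have "((\<lambda>y. y - x) \<longlongrightarrow> x - x) (at x)" by (intro tendsto_diff tendsto_ident_at tendsto_const)
    then show ?thesis by simp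
  qed
  have "((\<lambda>y. F y - y0) \<longlongrightarrow> 0) (at x)"
    by (rule tendsto_0_le[OF t, where K=C]) (use FL in \<open>simp add: mult.commute\<close>)
  then have "(F \<longlongrightarrow> y0) (at x)" by (simp add: LIM_zero_iff)
  then have "((\<lambda>y. \<phi> (F y)) \<longlongrightarrow> 0) (at x)" using isCont_tendsto_compose[OF cont, of F "at x"] \<open>\<phi> y0 = 0\<close> by simp
  then show "((\<lambda>y. (g (F y) - g y0 - g' (F y - y0)) / norm (y - x)) \<longlongrightarrow> 0) (at x)"
  proof (rule tendsto_0_le[where K=C])
    show "\<forall>\<^sub>F y in at x. norm ((g (F y) - g y0 - g' (F y - y0)) / norm (y - x)) \<le> norm (\<phi> (F y)) * C"
      using FL eventually_neq_at_within[of x x UNIV]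
    proof eventually_elim
      case (elim y)
      then have pos: "norm (y - x) > 0" by simp
      have phn: "0 \<le> \<phi> (F y)" by (simp add: \<phi>_def)
      have key: "\<bar>g (F y) - g y0 - g' (F y - y0)\<bar> = \<phi> (F y) * norm (F y - y0)"
      proof (cases "F y = y0")
        case True then show ?thesis using linear_0[OF bounded_linear.linear[OF bl]] by (simp add: \<phi>_def)
      next
        case False then show ?thesis by (simp add: \<phi>_def)
      qed
      have "\<phi> (F y) * norm (F y - y0) \<le> \<phi> (F y) * (C * norm (y - x))"
        using elim phn by (simp add: mult_left_mono)
      have "norm ((g (F y) - g y0 - g' (F y - y0)) / norm (y - x)) = \<bar>g (F y) - g y0 - g' (F y - y0)\<bar> / norm (y - x)"
        by (simp add: abs_div)
      also have "\<dots> \<le> \<phi> (F y) * (C * norm (y - x)) / norm (y - x)"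
        by (rule divide_right_mono) (use key \<open>\<phi> (F y) * norm (F y - y0) \<le> \<phi> (F y) * (C * norm (y - x))\<close> in auto)
      also have "\<dots> = norm (\<phi> (F y)) * C" using pos phn by simp
      finally show ?case .
    qed
  qed
qed


lemma pol_deriv:
  fixes f :: "real^'d::finite \<Rightarrow> real"
  assumes Th: "open \<Theta>" "\<theta> \<in> \<Theta>" and nn: "\<forall>\<eta>\<in>\<Theta>. 0 \<le> f \<eta>" and dif: "f differentiable (at \<theta>)"
  shows "(f has_derivative (\<lambda>h. f \<theta> * (grad (\<lambda>\<eta>. ln (f \<eta>)) \<theta> \<bullet> h))) (at \<theta>)"
proof -
  obtain D where D: "(f has_derivative D) (at \<theta>)" using dif differentiable_def by blast
  have bl: "bounded_linear D" using D has_derivative_bounded_linear by blast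
  show ?thesis
  proof (cases "f \<theta> = 0")
    case True
    have "D = (\<lambda>v. 0)" by (rule differential_zero_maxmin[OF Th(2) Th(1) D]) (use nn True in auto)
    then show ?thesis using D True by simp
  next
    case False
    then have pos: "f \<theta> > 0" using nn Th by force
    define w where "w = (\<chi> i. D (axis i 1) / f \<theta>)"
    have lnd: "((\<lambda>\<eta>. ln (f \<eta>)) has_derivative (\<lambda>h. w \<bullet> h)) (at \<theta>)"
    proof -
      have "((\<lambda>\<eta>. ln (f \<eta>)) has_derivative (\<lambda>h. inverse (f \<theta>) * D h)) (at \<theta>)"
        using has_derivative_compose[OF D DERIV_ln[OF pos, unfolded has_field_derivative_def]] by simp
      moreover have "(\<lambda>h. inverse (f \<theta>) * D h) = (\<lambda>h. w \<bullet> h)"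
      proof
        fix h :: "real^'d"
        show "inverse (f \<theta>) * D h = w \<bullet> h"
          unfolding lin_rep[OF bl, of h] by (simp add: w_def inner_vec_def sum_distrib_left field_simps)
      qed
      ultimately show ?thesis by simp
    qed
    let ?g = "grad (\<lambda>\<eta>. ln (f \<eta>)) \<theta>"
    have "((\<lambda>\<eta>. ln (f \<eta>)) has_derivative (\<lambda>h. ?g \<bullet> h)) (at \<theta>)"
      unfolding grad_def by (rule someI_ex) (use lnd in blast)
    then have gw: "(\<lambda>h. ?g \<bullet> h) = (\<lambda>h. w \<bullet> h)" using has_derivative_unique lnd by blast
    have "(\<lambda>h. f \<theta> * (?g \<bullet> h)) = D"
    proof
      fix h :: "real^'d"
      have "?g \<bullet> h = w \<bullet> h" using gw by meson
      then show "f \<theta> * (?g \<bullet> h) = D h"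
        unfolding lin_rep[OF bl, of h] using pos by (simp add: w_def inner_vec_def sum_distrib_left field_simps)
    qed
    then show ?thesis using D by simp
  qed
qed



theorem mainTheorem5:
  fixes \<sigma> :: "'s::finite \<Rightarrow> 'a::finite \<Rightarrow> real^'s \<Rightarrow> real"
    and r :: "'s \<Rightarrow> 'a \<Rightarrow> real" and \<gamma> :: real
    and \<Theta> :: "(real^'d) set"
    and pol :: "real^'d \<Rightarrow> 's \<Rightarrow> 'a \<Rightarrow> real"
    and Ph :: "real^'d \<Rightarrow> 's \<Rightarrow> 'a \<Rightarrow> 's \<Rightarrow> real"
  assumes r_range: "\<forall>s a. 0 \<le> r s a \<and> r s a \<le> 1"
    and gamma: "0 \<le> \<gamma>" "\<gamma> < 1"
    and risk: "\<forall>s a. convex_risk_measure (\<sigma> s a)"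
    and risk_diff: "\<forall>s a V. \<sigma> s a differentiable (at V)"
    and Theta_open: "open \<Theta>"
    and policy: "\<forall>\<theta>\<in>\<Theta>. stoch_policy (pol \<theta>)"
    and pi_diff: "\<forall>s a. \<forall>\<theta>\<in>\<Theta>. (\<lambda>\<theta>. pol \<theta> s a) differentiable (at \<theta>)"
    and Ph_worst: "\<forall>\<theta>\<in>\<Theta>. \<forall>s a.
                     is_worst_kernel (\<sigma> s a) (rvalue \<sigma> r \<gamma> (pol \<theta>)) (Ph \<theta> s a)"
    and theta: "\<theta> \<in> \<Theta>"
  shows "\<forall>s.
     (let G = (\<lambda>t. \<gamma> ^ t *\<^sub>R
                 (\<Sum>s'\<in>UNIV. \<Sum>a\<in>UNIV.
                    (state_dist (pol \<theta>) (Ph \<theta>) s t s' * pol \<theta> s' a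
                       * rQ \<sigma> r \<gamma> (pol \<theta>) s' a)
                    *\<^sub>R grad (\<lambda>\<eta>. ln (pol \<eta> s' a)) \<theta>))
      in summable G \<and>
         ((\<lambda>\<eta>. rvalue \<sigma> r \<gamma> (pol \<eta>) $ s) has_derivative (\<lambda>h. (\<Sum>t. G t) \<bullet> h)) (at \<theta>))"
proof -
  define V where "V \<eta> = rvalue \<sigma> r \<gamma> (pol \<eta>)" for \<eta>
  have bellVs: "V \<eta> $ s = (\<Sum>a\<in>UNIV. pol \<eta> s a * (r s a - \<gamma> * \<sigma> s a (V \<eta>)))" if "\<eta> \<in> \<Theta>" for \<eta> s
    using rvalue_fix[OF policy[rule_format, OF that] risk gamma] by (simp add: V_def)
  define P where "P = Ph \<theta>"
  have PS: "\<forall>s a. P s a \<in> prob_simplex" using Ph_worst theta by (auto simp: P_def is_worst_kernel_def)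
  have pth: "stoch_policy (pol \<theta>)" using policy theta by blast
  have sig_d: "(\<sigma> s a has_derivative (\<lambda>h. - (\<Sum>s'\<in>UNIV. P s a s' * h$s'))) (at (V \<theta>))" for s a
    using crm_deriv[OF risk[rule_format] risk_diff[rule_format] Ph_worst[rule_format, OF theta]]
    by (simp add: P_def V_def)
  define gr where "gr s a = grad (\<lambda>\<eta>. ln (pol \<eta> s a)) \<theta>" for s a
  have pd: "((\<lambda>\<eta>. pol \<eta> s a) has_derivative (\<lambda>h. pol \<theta> s a * (gr s a \<bullet> h))) (at \<theta>)" for s a
    unfolding gr_def
    by (rule pol_deriv[OF Theta_open theta]) (use policy stoch_nonneg pi_diff theta in auto)
  define Q where "Q s a = rQ \<sigma> r \<gamma> (pol \<theta>) s a" for s a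
  have Qeq: "Q s a = r s a - \<gamma> * \<sigma> s a (V \<theta>)" for s a by (simp add: Q_def rQ_def V_def)
  have evT: "eventually (\<lambda>\<eta>. \<eta> \<in> \<Theta>) (at \<theta>)"
    using Theta_open theta eventually_at_topological by blast
  define fs where "fs s \<eta> = (\<Sum>a\<in>UNIV. (pol \<eta> s a - pol \<theta> s a) * Q s a)" for s \<eta>
  define L where "L s h = (\<Sum>a\<in>UNIV. pol \<theta> s a * (gr s a \<bullet> h) * Q s a)" for s h
  have fsd: "(fs s has_derivative L s) (at \<theta>)" for s
  proof -
    have "((\<lambda>\<eta>. \<Sum>a\<in>UNIV. (pol \<eta> s a - pol \<theta> s a) * Q s a) has_derivative
        (\<lambda>h. \<Sum>a\<in>UNIV. (pol \<theta> s a * (gr s a \<bullet> h) - 0) * Q s a)) (at \<theta>)"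
      by (intro has_derivative_sum has_derivative_mult_left has_derivative_diff pd has_derivative_const)
    then show ?thesis unfolding fs_def[abs_def] L_def[abs_def] by simp
  qed
  have "\<forall>s. \<exists>C. eventually (\<lambda>\<eta>. norm (fs s \<eta> - fs s \<theta>) \<le> C * norm (\<eta> - \<theta>)) (at \<theta>)"
    using deriv_lip[OF fsd] by blast
  then obtain Cf where Cf: "\<And>s. eventually (\<lambda>\<eta>. norm (fs s \<eta> - fs s \<theta>) \<le> Cf s * norm (\<eta> - \<theta>)) (at \<theta>)"
    by metis
  have fs0: "fs s \<theta> = 0" for s by (simp add: fs_def)
  define CF where "CF = (\<Sum>s\<in>UNIV. \<bar>Cf s\<bar>)"
  have evF: "eventually (\<lambda>\<eta>. \<forall>s. \<bar>fs s \<eta>\<bar> \<le> CF * norm (\<eta> - \<theta>)) (at \<theta>)"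
  proof (rule eventually_all_finite)
    fix s
    have le: "\<bar>Cf s\<bar> \<le> CF" unfolding CF_def by (rule member_le_sum) auto
    show "eventually (\<lambda>\<eta>. \<bar>fs s \<eta>\<bar> \<le> CF * norm (\<eta> - \<theta>)) (at \<theta>)"
      using Cf[of s]
    proof eventually_elim
      case (elim \<eta>)
      have "Cf s * norm (\<eta> - \<theta>) \<le> CF * norm (\<eta> - \<theta>)"
        using le by (intro mult_right_mono) auto
      then show ?case using elim fs0[of s] by simp
    qed
  qed
  have diffV: "V \<eta> $ s - V \<theta> $ s = (bell \<sigma> r \<gamma> (pol \<eta>) (V \<eta>) $ s - bell \<sigma> r \<gamma> (pol \<eta>) (V \<theta>) $ s) + fs s \<eta>"
    if "\<eta> \<in> \<Theta>" for \<eta> s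
  proof -
    have "bell \<sigma> r \<gamma> (pol \<eta>) (V \<theta>) $ s - V \<theta> $ s = fs s \<eta>"
      using bellVs[OF theta, of s]
      by (simp add: bell_def fs_def Qeq sum_subtractf[symmetric] left_diff_distrib)
    moreover have "V \<eta> $ s = bell \<sigma> r \<gamma> (pol \<eta>) (V \<eta>) $ s" using bellVs[OF that, of s] by (simp add: bell_def)
    ultimately show ?thesis by simp
  qed
  define CV where "CV = real CARD('s) * (CF / (1 - \<gamma>))"
  have evV: "eventually (\<lambda>\<eta>. norm (V \<eta> - V \<theta>) \<le> CV * norm (\<eta> - \<theta>)) (at \<theta>)"
    using evT evF
  proof eventually_elim
    case (elim \<eta>)
    have "\<bar>(V \<eta> - V \<theta>) $ s\<bar> \<le> \<gamma> * supn (V \<eta> - V \<theta>) + CF * norm (\<eta> - \<theta>)" for s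
    proof -
      have "\<bar>bell \<sigma> r \<gamma> (pol \<eta>) (V \<eta>) $ s - bell \<sigma> r \<gamma> (pol \<eta>) (V \<theta>) $ s\<bar> \<le> \<gamma> * supn (V \<eta> - V \<theta>)"
        by (rule bell_diff_bound[OF policy[rule_format, OF elim(1)] risk gamma(1)])
      then show ?thesis using diffV[OF elim(1), of s] spec[OF elim(2), of s] by (simp add: abs_le_iff)
    qed
    then have "supn (V \<eta> - V \<theta>) \<le> \<gamma> * supn (V \<eta> - V \<theta>) + CF * norm (\<eta> - \<theta>)"
      by (intro supn_le) simp
    then have "supn (V \<eta> - V \<theta>) \<le> (CF / (1 - \<gamma>)) * norm (\<eta> - \<theta>)"
      using gamma by (simp add: field_simps)
    then have "real CARD('s) * supn (V \<eta> - V \<theta>) \<le> real CARD('s) * ((CF / (1 - \<gamma>)) * norm (\<eta> - \<theta>))"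
      by (intro mult_left_mono) auto
    then show ?case using norm_le_supn[of "V \<eta> - V \<theta>"] by (simp add: CV_def mult.assoc)
  qed
  define W where "W s \<eta> = V \<eta> $ s - \<gamma> * (\<Sum>a\<in>UNIV. pol \<theta> s a * (\<Sum>s''\<in>UNIV. P s a s'' * V \<eta> $ s''))" for s \<eta>
  have Wd: "(W s has_derivative L s) (at \<theta>)" for s
  proof -
    define U where "U a \<eta> = (pol \<eta> s a - pol \<theta> s a) * (\<sigma> s a (V \<eta>) - \<sigma> s a (V \<theta>))" for a \<eta>
    define R where "R a \<eta> = \<sigma> s a (V \<eta>) - \<sigma> s a (V \<theta>) - (- (\<Sum>s''\<in>UNIV. P s a s'' * (V \<eta> - V \<theta>) $ s''))" for a \<eta>
    have Ud: "(U a has_derivative (\<lambda>h. 0)) (at \<theta>)" for a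
    proof -
      obtain Cp where Cp: "eventually (\<lambda>\<eta>. norm (pol \<eta> s a - pol \<theta> s a) \<le> Cp * norm (\<eta> - \<theta>)) (at \<theta>)"
        using deriv_lip[OF pd] by blast
      show ?thesis
      proof (rule deriv_zero_quad[where C="Cp * CV"])
      show "U a \<theta> = 0" by (simp add: U_def)
      show "eventually (\<lambda>\<eta>. \<bar>U a \<eta>\<bar> \<le> (Cp * CV) * (norm (\<eta> - \<theta>))^2) (at \<theta>)"
        using Cp evV
      proof eventually_elim
        case (elim \<eta>)
        have "\<bar>\<sigma> s a (V \<eta>) - \<sigma> s a (V \<theta>)\<bar> \<le> CV * norm (\<eta> - \<theta>)"
          using crm_lip[OF risk[rule_format], of s a "V \<eta>" "V \<theta>"] supn_le_norm[of "V \<eta> - V \<theta>"] elim(2)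
          by linarith
        moreover have "\<bar>pol \<eta> s a - pol \<theta> s a\<bar> \<le> Cp * norm (\<eta> - \<theta>)" using elim(1) by simp
        ultimately have "\<bar>pol \<eta> s a - pol \<theta> s a\<bar> * \<bar>\<sigma> s a (V \<eta>) - \<sigma> s a (V \<theta>)\<bar>
            \<le> (Cp * norm (\<eta> - \<theta>)) * (CV * norm (\<eta> - \<theta>))"
          by (intro mult_mono) (auto intro: order_trans[OF abs_ge_zero])
        then show ?case by (simp add: U_def abs_mult power2_eq_square mult_ac)
      qed
    qed
    qed
    have Rd: "(R a has_derivative (\<lambda>h. 0)) (at \<theta>)" for a
      using lip_chain[where F=V and x=\<theta>, OF sig_d[of s a] refl evV]
      unfolding R_def by simp
    have eqW: "W s \<theta> + fs s \<eta> - \<gamma> * (\<Sum>a\<in>UNIV. U a \<eta> + pol \<theta> s a * R a \<eta>) = W s \<eta>"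
      if "\<eta> \<in> \<Theta>" for \<eta>
    proof -
      have "W s \<theta> + fs s \<eta> - \<gamma> * (\<Sum>a\<in>UNIV. U a \<eta> + pol \<theta> s a * R a \<eta>)
        = (\<Sum>a\<in>UNIV. pol \<theta> s a * (r s a - \<gamma> * \<sigma> s a (V \<theta>)) - \<gamma> * (pol \<theta> s a * (\<Sum>s''\<in>UNIV. P s a s'' * V \<theta> $ s''))
             + (pol \<eta> s a - pol \<theta> s a) * Q s a - \<gamma> * (U a \<eta> + pol \<theta> s a * R a \<eta>))"
        unfolding W_def fs_def bellVs[OF theta]
        by (simp add: sum.distrib sum_subtractf sum_distrib_left distrib_left)
      also have "\<dots> = (\<Sum>a\<in>UNIV. pol \<eta> s a * (r s a - \<gamma> * \<sigma> s a (V \<eta>)) - \<gamma> * (pol \<theta> s a * (\<Sum>s''\<in>UNIV. P s a s'' * V \<eta> $ s'')))"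
      proof (rule sum.cong[OF refl])
        fix a
        have sP: "(\<Sum>s''\<in>UNIV. P s a s'' * (V \<eta> - V \<theta>) $ s'') = (\<Sum>s''\<in>UNIV. P s a s'' * V \<eta> $ s'') - (\<Sum>s''\<in>UNIV. P s a s'' * V \<theta> $ s'')"
          by (simp add: right_diff_distrib sum_subtractf)
        have ring: "\<And>A B x y p q r G :: real. B*(r - G*y) - G*(B*q) + (A - B)*(r - G*y) - G*((A-B)*(x-y) + B*(x - y - - (p - q))) = A*(r - G*x) - G*(B*p)"
          by (simp add: algebra_simps)
        show "pol \<theta> s a * (r s a - \<gamma> * \<sigma> s a (V \<theta>)) - \<gamma> * (pol \<theta> s a * (\<Sum>s''\<in>UNIV. P s a s'' * V \<theta> $ s''))
             + (pol \<eta> s a - pol \<theta> s a) * Q s a - \<gamma> * (U a \<eta> + pol \<theta> s a * R a \<eta>)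
            = pol \<eta> s a * (r s a - \<gamma> * \<sigma> s a (V \<eta>)) - \<gamma> * (pol \<theta> s a * (\<Sum>s''\<in>UNIV. P s a s'' * V \<eta> $ s''))"
          unfolding U_def R_def Qeq sP by (rule ring)
      qed
      also have "\<dots> = W s \<eta>"
        unfolding W_def bellVs[OF that] by (simp add: sum_subtractf sum_distrib_left)
      finally show ?thesis .
    qed
    have "((\<lambda>\<eta>. W s \<theta> + fs s \<eta> - \<gamma> * (\<Sum>a\<in>UNIV. U a \<eta> + pol \<theta> s a * R a \<eta>)) has_derivative
          (\<lambda>h. 0 + L s h - \<gamma> * (\<Sum>a\<in>UNIV. 0 + pol \<theta> s a * 0))) (at \<theta>)"
      by (intro has_derivative_add has_derivative_diff has_derivative_const fsd has_derivative_mult_right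
          has_derivative_sum Ud Rd)
    then have "((\<lambda>\<eta>. W s \<theta> + fs s \<eta> - \<gamma> * (\<Sum>a\<in>UNIV. U a \<eta> + pol \<theta> s a * R a \<eta>)) has_derivative L s) (at \<theta>)"
      by simp
    then show ?thesis by (rule has_derivative_transform_within_open[OF _ Theta_open theta]) (rule eqW)
  qed
  have Vcoef: "V \<eta> $ s0 = (\<Sum>s'\<in>UNIV. coef (pol \<theta>) P \<gamma> s0 s' * W s' \<eta>)" for \<eta> s0
    using coef_identity[OF pth PS gamma, of "\<lambda>s. V \<eta> $ s" s0] by (simp add: W_def)
  have Vd: "((\<lambda>\<eta>. V \<eta> $ s0) has_derivative (\<lambda>h. \<Sum>s'\<in>UNIV. coef (pol \<theta>) P \<gamma> s0 s' * L s' h)) (at \<theta>)" for s0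
    unfolding Vcoef by (intro has_derivative_sum has_derivative_mult_right Wd)
  define Gf where "Gf s0 = (\<lambda>t. \<gamma> ^ t *\<^sub>R
                 (\<Sum>s'\<in>UNIV. \<Sum>a\<in>UNIV.
                    (state_dist (pol \<theta>) (Ph \<theta>) s0 t s' * pol \<theta> s' a
                       * rQ \<sigma> r \<gamma> (pol \<theta>) s' a)
                    *\<^sub>R grad (\<lambda>\<eta>. ln (pol \<eta> s' a)) \<theta>))" for s0
  have Geq: "Gf s0 t = \<gamma> ^ t *\<^sub>R (\<Sum>s'\<in>UNIV. \<Sum>a\<in>UNIV. (state_dist (pol \<theta>) P s0 t s' * pol \<theta> s' a * Q s' a) *\<^sub>R gr s' a)" for s0 t
    by (simp add: Gf_def P_def Q_def gr_def)
  define K where "K = (\<Sum>s'\<in>UNIV. \<Sum>a\<in>UNIV. \<bar>pol \<theta> s' a * Q s' a\<bar> * norm (gr s' a))"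
  have sumG: "summable (Gf s0)" for s0
  proof (rule summable_comparison_test[where g="\<lambda>t. \<gamma> ^ t * K"])
    show "summable (\<lambda>t. \<gamma> ^ t * K)" using gamma by (intro summable_mult2) (simp add: summable_geometric)
    show "\<exists>N. \<forall>n\<ge>N. norm (Gf s0 n) \<le> \<gamma> ^ n * K"
    proof (intro exI allI impI)
      fix n :: nat
      have "norm (\<Sum>s'\<in>UNIV. \<Sum>a\<in>UNIV. (state_dist (pol \<theta>) P s0 n s' * pol \<theta> s' a * Q s' a) *\<^sub>R gr s' a)
          \<le> (\<Sum>s'\<in>UNIV. norm (\<Sum>a\<in>UNIV. (state_dist (pol \<theta>) P s0 n s' * pol \<theta> s' a * Q s' a) *\<^sub>R gr s' a))"
        by (rule norm_sum)
      also have "\<dots> \<le> K" unfolding K_def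
      proof (rule sum_mono)
        fix s'
        have "norm (\<Sum>a\<in>UNIV. (state_dist (pol \<theta>) P s0 n s' * pol \<theta> s' a * Q s' a) *\<^sub>R gr s' a)
            \<le> (\<Sum>a\<in>UNIV. norm ((state_dist (pol \<theta>) P s0 n s' * pol \<theta> s' a * Q s' a) *\<^sub>R gr s' a))"
          by (rule norm_sum)
        also have "\<dots> \<le> (\<Sum>a\<in>UNIV. \<bar>pol \<theta> s' a * Q s' a\<bar> * norm (gr s' a))"
        proof (rule sum_mono)
          fix a
          have d0: "0 \<le> state_dist (pol \<theta>) P s0 n s'" and d1: "state_dist (pol \<theta>) P s0 n s' \<le> 1"
            using sd_nonneg[OF pth PS gamma] sd_le1[OF pth PS gamma] by auto
          have "\<bar>state_dist (pol \<theta>) P s0 n s' * pol \<theta> s' a * Q s' a\<bar> \<le> \<bar>pol \<theta> s' a * Q s' a\<bar>"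
            using d0 d1 by (simp add: abs_mult mult_left_le_one_le mult.assoc)
          then show "norm ((state_dist (pol \<theta>) P s0 n s' * pol \<theta> s' a * Q s' a) *\<^sub>R gr s' a)
              \<le> \<bar>pol \<theta> s' a * Q s' a\<bar> * norm (gr s' a)"
            by (simp add: mult_right_mono)
        qed
        finally show "norm (\<Sum>a\<in>UNIV. (state_dist (pol \<theta>) P s0 n s' * pol \<theta> s' a * Q s' a) *\<^sub>R gr s' a)
            \<le> (\<Sum>a\<in>UNIV. \<bar>pol \<theta> s' a * Q s' a\<bar> * norm (gr s' a))" .
      qed
      finally have "norm (\<Sum>s'\<in>UNIV. \<Sum>a\<in>UNIV. (state_dist (pol \<theta>) P s0 n s' * pol \<theta> s' a * Q s' a) *\<^sub>R gr s' a) \<le> K" .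
      then show "norm (Gf s0 n) \<le> \<gamma> ^ n * K"
        unfolding Geq using gamma by (simp add: mult_left_mono)
    qed
  qed
  have inner: "(\<Sum>t. Gf s0 t) \<bullet> h = (\<Sum>s'\<in>UNIV. coef (pol \<theta>) P \<gamma> s0 s' * L s' h)" for s0 h
  proof -
    have "(\<Sum>t. Gf s0 t) \<bullet> h = (\<Sum>t. Gf s0 t \<bullet> h)"
      by (rule bounded_linear.suminf[OF bounded_linear_inner_left sumG])
    also have "\<dots> = (\<Sum>t. \<gamma> ^ t * (\<Sum>s'\<in>UNIV. state_dist (pol \<theta>) P s0 t s' * L s' h))"
      by (simp add: Geq inner_sum_left L_def sum_distrib_left mult_ac)
    also have "\<dots> = (\<Sum>s'\<in>UNIV. coef (pol \<theta>) P \<gamma> s0 s' * L s' h)"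
      by (rule coef_lin[OF pth PS gamma, symmetric])
    finally show ?thesis .
  qed
  have main: "summable (Gf s0) \<and> ((\<lambda>\<eta>. V \<eta> $ s0) has_derivative (\<lambda>h. (\<Sum>t. Gf s0 t) \<bullet> h)) (at \<theta>)" for s0
    using sumG[of s0] Vd[of s0] inner[of s0] by simp
  show ?thesis unfolding Let_def using main unfolding Gf_def V_def by blast
qed

end
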